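(* Let the data $y\in\mathbb{R}^n$, $X\in\mathbb{R}^{n\times p}$, $Z\in\mathbb{R}^{n\times q}$ be fixed, with $Z^TZ$ and $X^TP_ZX$ non-singular, and thin SVDs $X=U_X\Sigma_XV_X^T$, $Z=U_Z\Sigma_ZV_Z^T$. Let $\widehat e=y-X\widehat\beta_{2SLS}$ with $\widehat\beta_{2SLS}=(X^TP_ZX)^{-1}X^TP_Zy$, and let $\Pi\in\mathbb{R}^{m\times n}$ be random. Given $\varepsilon_1,\varepsilon_2,\varepsilon_3,\delta\in(0,1/2)$, suppose that jointly with probability at least $1-\delta$: $\|U_Z^T\Pi^T\Pi U_Z-I_q\|_2\le\varepsilon_1$, $\|U_Z^T\Pi^T\Pi U_X-U_Z^TU_X\|_2\le\varepsilon_2$, $\|U_Z^T\Pi^T\Pi\widehat e-U_Z^T\widehat e\|\le\varepsilon_3\|\widehat e\|$; and that $\sigma_{\min}^2(U_Z^TU_X)\ge 2f_1(\varepsilon_1,\varepsilon_2)$. Let $\widetilde A:=U_X^T\Pi^T\Pi U_Z(U_Z^T\Pi^T\Pi U_Z)^{-1}U_Z^T\Pi^T\Pi U_X$ and $\widehat A:=U_X^TU_ZU_Z^TU_X$. Then with probability at least $1-\delta$, $$\|\widetilde A^{-1}-\widehat A^{-1}\|_2\le\frac{2f_1(\varepsilon_1,\varepsilon_2)}{\sigma_{\min}^4(U_Z^TU_X)}.$$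
   Context: $P_Z=Z(Z^TZ)^{-1}Z^T$; $f_1(\varepsilon_1,\varepsilon_2):=[\varepsilon_1+\varepsilon_2(\varepsilon_2+2)]/(1-\varepsilon_1)$. $\|\cdot\|_2$ is the spectral norm, $\sigma_{\min}$ the smallest singular value. *)

theory Defs
  imports "HOL-Probability.Probability"
begin

definition f1 :: "real \<Rightarrow> real \<Rightarrow> real" where
  "f1 e1 e2 = (e1 + e2 * (e2 + 2)) / (1 - e1)"

definition projZ :: "real^'q^'n \<Rightarrow> real^'n^'n" where
  "projZ Z = Z ** matrix_inv (transpose Z ** Z) ** transpose Z"

definition spec_norm :: "real^'c^'r \<Rightarrow> real" where
  "spec_norm A = onorm (\<lambda>x. A *v x)"

definition sigma_min :: "real^'c^'r \<Rightarrow> real" where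
  "sigma_min A = sqrt (Min {lam. \<exists>v. v \<noteq> 0 \<and> (transpose A ** A) *v v = lam *\<^sub>R v})"

definition thin_svd :: "real^'k^'r \<Rightarrow> real^'k^'r \<Rightarrow> real^'k^'k \<Rightarrow> real^'k^'k \<Rightarrow> bool" where
  "thin_svd A U S V \<longleftrightarrow> A = U ** S ** transpose V \<and> transpose U ** U = mat 1
     \<and> (\<forall>i j. i \<noteq> j \<longrightarrow> S $ i $ j = 0) \<and> (\<forall>i. S $ i $ i > 0)
     \<and> transpose V ** V = mat 1 \<and> V ** transpose V = mat 1"

end

theory Submission
  imports Defs
begin


lemma tr_dot: "(transpose M *v w) \<bullet> x = w \<bullet> (M *v (x::real^'a))"
  for M :: "real^'a^'b"
  by (simp add: dot_lmul_matrix)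

lemma tr_bound:
  fixes M :: "real^'a^'b"
  assumes "\<And>x. norm (M *v x) \<le> K * norm x"
  shows "norm (transpose M *v w) \<le> K * norm w"
proof -
  let ?u = "transpose M *v w"
  have "norm ?u ^ 2 = ?u \<bullet> ?u" by (simp add: power2_norm_eq_inner)
  also have "\<dots> = w \<bullet> (M *v ?u)" by (rule tr_dot)
  also have "\<dots> \<le> norm w * norm (M *v ?u)" by (rule norm_cauchy_schwarz)
  also have "\<dots> \<le> norm w * (K * norm ?u)" by (simp add: assms mult_left_mono)
  finally have h: "norm ?u ^ 2 \<le> K * norm w * norm ?u" by (simp add: algebra_simps)
  show ?thesis
  proof (cases "norm ?u = 0")
    case True
    obtain i :: 'a where True by simp
    have "0 \<le> norm (M *v axis i (1::real))" by simp
    also have "\<dots> \<le> K * norm (axis i (1::real))" by (rule assms)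
    finally have "0 \<le> K" by simp
    then have "0 \<le> K * norm w" by simp
    then show ?thesis using True by simp
  next
    case False
    then have "norm ?u > 0" by simp
    with h show ?thesis by (simp add: power2_eq_square)
  qed
qed

lemma spec_le: "spec_norm M \<le> e \<Longrightarrow> norm (M *v x) \<le> e * norm x"
  for M :: "real^'a^'b"
  unfolding spec_norm_def
  by (meson matrix_vector_mul_bounded_linear mult_right_mono norm_ge_zero onorm order_trans)

lemma spec_ge: "(\<And>x. norm (M *v x) \<le> e * norm x) \<Longrightarrow> spec_norm M \<le> e"
  for M :: "real^'a^'b"
  unfolding spec_norm_def by (rule onorm_le)

lemma inv_bound:
  fixes A :: "real^'k^'k"
  assumes c: "c > 0" and lb: "\<And>x. c * norm x \<le> norm (A *v x)"
  shows "A ** matrix_inv A = mat 1" "matrix_inv A ** A = mat 1"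
    "\<And>w. c * norm (matrix_inv A *v w) \<le> norm w"
proof -
  have "inj ((*v) A)"
  proof (rule injI)
    fix x y assume "A *v x = A *v y"
    then have "A *v (x - y) = 0" by (simp add: matrix_vector_mult_diff_distrib)
    then have "c * norm (x - y) \<le> 0" using lb[of "x - y"] by simp
    then show "x = y" using c by (simp add: mult_le_0_iff)
  qed
  then obtain B where "B ** A = mat 1" using matrix_left_invertible_injective by blast
  then have "invertible A" using invertible_left_inverse by blast
  then have *: "A ** matrix_inv A = mat 1 \<and> matrix_inv A ** A = mat 1"
    unfolding invertible_def matrix_inv_def by (rule someI_ex)
  then show "A ** matrix_inv A = mat 1" "matrix_inv A ** A = mat 1" by auto
  fix w
  have "A *v (matrix_inv A *v w) = w" using * by (simp add: matrix_vector_mul_assoc)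
  then show "c * norm (matrix_inv A *v w) \<le> norm w" using lb[of "matrix_inv A *v w"] by simp
qed



lemma quad_zero:
  fixes a c :: real
  assumes "\<And>t. 0 \<le> 2 * t * a + t^2 * c" and "a \<ge> 0"
  shows "a = 0"
proof (rule ccontr)
  assume "a \<noteq> 0"
  then have a: "a > 0" using assms(2) by simp
  define t where "t = - a / (\<bar>c\<bar> + 1)"
  have d: "\<bar>c\<bar> + 1 > 0" by simp
  have "0 \<le> 2 * t * a + t^2 * c" by (rule assms)
  then have "0 \<le> t * (2 * a + t * c)" by (simp add: power2_eq_square algebra_simps)
  moreover have "t < 0" using a d by (simp add: t_def)
  ultimately have "2 * a + t * c \<le> 0" by (simp add: mult_le_0_iff zero_le_mult_iff)
  moreover have "\<bar>t * c\<bar> \<le> a"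
  proof -
    have "\<bar>t * c\<bar> = a * (\<bar>c\<bar> / (\<bar>c\<bar> + 1))" using a d by (simp add: t_def abs_mult)
    also have "\<dots> \<le> a * 1" using a d by (intro mult_left_mono) auto
    finally show ?thesis by simp
  qed
  ultimately show False using a by linarith
qed

lemma sigma_min_bound:
  fixes B :: "real^'p^'q"
  shows "(sigma_min B)^2 * (norm x)^2 \<le> (norm (B *v x))^2" "sigma_min B \<ge> 0"
proof -
  let ?A = "transpose B ** B"
  have Aq: "u \<bullet> (?A *v w) = (B *v u) \<bullet> (B *v w)" for u w
  proof -
    have "u \<bullet> (?A *v w) = (transpose B *v (B *v w)) \<bullet> u"
      by (simp only: matrix_vector_mul_assoc[symmetric] inner_commute)
    also have "\<dots> = (B *v w) \<bullet> (B *v u)" by (rule tr_dot)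
    finally show ?thesis by (simp add: inner_commute)
  qed
  define Q where "Q x = (norm (B *v x))^2" for x
  have cQ: "continuous_on (sphere 0 1) Q"
    unfolding Q_def by (intro continuous_intros linear_continuous_on) simp
  obtain i :: 'p where True by simp
  have ne: "sphere (0::real^'p) 1 \<noteq> {}" using norm_axis_1[of i] by (auto simp: sphere_def intro!: exI[of _ "axis i (1::real)"])
  obtain x0 where x0: "x0 \<in> sphere 0 1" and mn: "\<And>y. y \<in> sphere 0 1 \<Longrightarrow> Q x0 \<le> Q y"
    using continuous_attains_inf[OF compact_sphere ne cQ] by blast
  define mu where "mu = Q x0"
  have nx0: "norm x0 = 1" using x0 by simp
  have mub: "mu * (norm y)^2 \<le> (norm (B *v y))^2" for y
  proof (cases "y = 0")
    case False
    have "mu \<le> Q (y /\<^sub>R norm y)" unfolding mu_def using False by (intro mn) simp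
    also have "\<dots> = (norm (B *v y))^2 / (norm y)^2"
      unfolding Q_def by (simp add: matrix_vector_mult_scaleR power_divide power_mult_distrib field_simps)
    finally show ?thesis using False by (simp add: pos_le_divide_eq)
  qed simp
  have mu0: "mu \<ge> 0" unfolding mu_def Q_def by simp
  define r where "r = ?A *v x0 - mu *\<^sub>R x0"
  have "\<And>t. 0 \<le> 2 * t * (r \<bullet> r) + t^2 * ((norm (B *v r))^2 - mu * (norm r)^2)"
  proof -
    fix t :: real
    have "mu * (norm (x0 + t *\<^sub>R r))^2 \<le> (norm (B *v (x0 + t *\<^sub>R r)))^2" by (rule mub)
    moreover have "(norm (x0 + t *\<^sub>R r))^2 = 1 + 2 * t * (x0 \<bullet> r) + t^2 * (norm r)^2"
    proof -
      have "(norm (x0 + t *\<^sub>R r))^2 = (x0 + t *\<^sub>R r) \<bullet> (x0 + t *\<^sub>R r)" by (simp only: power2_norm_eq_inner)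
      also have "\<dots> = x0 \<bullet> x0 + 2 * t * (x0 \<bullet> r) + t^2 * (r \<bullet> r)"
        by (simp add: inner_add_left inner_add_right inner_commute power2_eq_square algebra_simps)
      finally show ?thesis using nx0 by (simp add: power2_norm_eq_inner[symmetric])
    qed
    moreover have "(norm (B *v (x0 + t *\<^sub>R r)))^2 = mu + 2 * t * ((?A *v x0) \<bullet> r) + t^2 * (norm (B *v r))^2"
    proof -
      have "(?A *v x0) \<bullet> r = (B *v x0) \<bullet> (B *v r)" using Aq[of r x0] by (simp add: inner_commute)
      have "(norm (B *v (x0 + t *\<^sub>R r)))^2 = (B *v x0 + t *\<^sub>R (B *v r)) \<bullet> (B *v x0 + t *\<^sub>R (B *v r))"
        by (simp only: power2_norm_eq_inner matrix_vector_right_distrib matrix_vector_mult_scaleR)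
      also have "\<dots> = (B *v x0) \<bullet> (B *v x0) + 2 * t * ((B *v x0) \<bullet> (B *v r)) + t^2 * ((B *v r) \<bullet> (B *v r))"
        by (simp add: inner_add_left inner_add_right inner_commute power2_eq_square algebra_simps)
      finally show ?thesis using \<open>(?A *v x0) \<bullet> r = _\<close>
        by (simp add: mu_def Q_def power2_norm_eq_inner[symmetric])
    qed
    moreover have "(?A *v x0) \<bullet> r = r \<bullet> r + mu * (x0 \<bullet> r)"
      by (simp add: r_def inner_diff_left inner_commute)
    ultimately show "0 \<le> 2 * t * (r \<bullet> r) + t^2 * ((norm (B *v r))^2 - mu * (norm r)^2)"
      by (simp add: algebra_simps)
  qed
  then have "r \<bullet> r = 0" by (rule quad_zero) simp
  then have eig: "?A *v x0 = mu *\<^sub>R x0" unfolding r_def by simp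
  define E where "E = {lam. \<exists>v. v \<noteq> 0 \<and> ?A *v v = lam *\<^sub>R v}"
  have muE: "mu \<in> E" unfolding E_def using eig nx0 by (intro CollectI exI[of _ x0]) auto
  have geE: "mu \<le> lam" if lE: "lam \<in> E" for lam
  proof -
    obtain v where v: "v \<noteq> 0" "?A *v v = lam *\<^sub>R v" using lE unfolding E_def by auto
    have "lam * (norm v)^2 = v \<bullet> (?A *v v)" using v by (simp add: power2_norm_eq_inner)
    also have "\<dots> = (norm (B *v v))^2" using Aq[of v v] by (simp add: power2_norm_eq_inner)
    finally have "mu * (norm v)^2 \<le> lam * (norm v)^2" using mub[of v] by simp
    then show ?thesis using v by simp
  qed
  define V where "V lam = (SOME v. v \<noteq> 0 \<and> ?A *v v = lam *\<^sub>R v)" for lam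
  have V: "V lam \<noteq> 0 \<and> ?A *v V lam = lam *\<^sub>R V lam" if "lam \<in> E" for lam
    using that unfolding E_def V_def by (rule CollectE) (rule someI_ex)
  have orth: "V l1 \<bullet> V l2 = 0" if "l1 \<in> E" "l2 \<in> E" "l1 \<noteq> l2" for l1 l2
  proof -
    have "l1 * (V l1 \<bullet> V l2) = (?A *v V l1) \<bullet> V l2" using V[OF that(1)] by simp
    also have "\<dots> = V l2 \<bullet> (?A *v V l1)" by (simp add: inner_commute)
    also have "\<dots> = V l1 \<bullet> (?A *v V l2)" using Aq by (simp add: inner_commute)
    also have "\<dots> = l2 * (V l1 \<bullet> V l2)" using V[OF that(2)] by simp
    finally show ?thesis using that(3) by simp
  qed
  have injV: "inj_on V E"
  proof (rule inj_onI)
    fix l1 l2 assume h: "l1 \<in> E" "l2 \<in> E" "V l1 = V l2"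
    show "l1 = l2"
    proof (rule ccontr)
      assume "l1 \<noteq> l2"
      then have "V l1 \<bullet> V l1 = 0" using orth[OF h(1,2)] h(3) by simp
      then show False using V[OF h(1)] by simp
    qed
  qed
  have "pairwise orthogonal (V ` E)"
    unfolding pairwise_def orthogonal_def using orth by auto
  moreover have "0 \<notin> V ` E" using V by auto
  ultimately have "independent (V ` E)" by (rule pairwise_orthogonal_independent)
  then have "finite (V ` E)" using independent_bound by blast
  then have fE: "finite E" using injV finite_imageD by blast
  have "Min E = mu"
    using fE muE geE by (intro Min_eqI) auto
  then have sm: "sigma_min B = sqrt mu" unfolding sigma_min_def E_def by simp
  then show "sigma_min B \<ge> 0" using mu0 by simp
  have "(sigma_min B)^2 = mu" using sm mu0 by simp
  then show "(sigma_min B)^2 * (norm x)^2 \<le> (norm (B *v x))^2" using mub by simp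
qed



lemma core:
  fixes UX :: "real^'p^'n" and UZ :: "real^'q^'n" and S :: "real^'n^'n"
  assumes UX: "transpose UX ** UX = mat 1" and UZ: "transpose UZ ** UZ = mat 1"
    and St: "transpose S = S"
    and e1: "0 < e1" "e1 < 1/2" and e2: "0 < e2"
    and h1: "spec_norm (transpose UZ ** S ** UZ - mat 1) \<le> e1"
    and h2: "spec_norm (transpose UZ ** S ** UX - transpose UZ ** UX) \<le> e2"
    and hs: "(sigma_min (transpose UZ ** UX))\<^sup>2 \<ge> 2 * f1 e1 e2"
  shows "spec_norm (matrix_inv (transpose UX ** S ** UZ ** matrix_inv (transpose UZ ** S ** UZ)
                       ** transpose UZ ** S ** UX) - matrix_inv (transpose UX ** UZ ** transpose UZ ** UX))
                 \<le> 2 * f1 e1 e2 / (sigma_min (transpose UZ ** UX)) ^ 4"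
proof -
  define C where "C = transpose UZ ** S ** UZ"
  define D where "D = transpose UZ ** S ** UX"
  define B where "B = transpose UZ ** UX"
  define Ci where "Ci = matrix_inv C"
  define At where "At = transpose UX ** S ** UZ ** Ci ** transpose UZ ** S ** UX"
  define Ah where "Ah = transpose UX ** UZ ** transpose UZ ** UX"
  define f where "f = f1 e1 e2"
  define s where "s = sigma_min B"
  have fpos: "f > 0" unfolding f_def f1_def using e1 e2 by (intro divide_pos_pos add_pos_nonneg) auto
  have s2: "s^2 \<ge> 2 * f" using hs unfolding s_def B_def f_def .
  have s2pos: "s^2 > 0" using s2 fpos by linarith
  have sB: "s^2 * (norm x)^2 \<le> (norm (B *v x))^2" for x
    unfolding s_def by (rule sigma_min_bound)
  have isoX: "norm (UX *v x) = norm x" for x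
  proof -
    have "(norm (UX *v x))^2 = (transpose UX *v (UX *v x)) \<bullet> x"
      by (simp only: tr_dot power2_norm_eq_inner)
    also have "\<dots> = (norm x)^2" using UX by (simp add: matrix_vector_mul_assoc power2_norm_eq_inner)
    finally show ?thesis by simp
  qed
  have isoZ: "norm (UZ *v x) = norm x" for x
  proof -
    have "(norm (UZ *v x))^2 = (transpose UZ *v (UZ *v x)) \<bullet> x"
      by (simp only: tr_dot power2_norm_eq_inner)
    also have "\<dots> = (norm x)^2" using UZ by (simp add: matrix_vector_mul_assoc power2_norm_eq_inner)
    finally show ?thesis by simp
  qed
  have UZt: "norm (transpose UZ *v w) \<le> 1 * norm w" for w
    by (rule tr_bound) (simp add: isoZ)
  have Bb: "norm (B *v x) \<le> 1 * norm x" for x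
    using UZt[of "UX *v x"] by (simp add: B_def matrix_vector_mul_assoc[symmetric] isoX)
  have hC: "norm (C *v u - u) \<le> e1 * norm u" for u
    using spec_le[OF h1, of u] by (simp add: C_def matrix_vector_mult_diff_rdistrib)
  have hD: "norm (D *v x - B *v x) \<le> e2 * norm x" for x
    using spec_le[OF h2, of x] by (simp add: D_def B_def matrix_vector_mult_diff_rdistrib)
  have Db: "norm (D *v x) \<le> (1 + e2) * norm x" for x
  proof -
    have "norm (D *v x) \<le> norm (D *v x - B *v x) + norm (B *v x)" by (metis norm_triangle_sub add.commute)
    also have "\<dots> \<le> e2 * norm x + 1 * norm x" using hD Bb by (intro add_mono)
    finally show ?thesis by (simp add: algebra_simps)
  qed
  have DTb: "norm (transpose D *v w) \<le> (1 + e2) * norm w" for w by (rule tr_bound[OF Db])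
  have DBTb: "norm (transpose (D - B) *v w) \<le> e2 * norm w" for w
    by (rule tr_bound) (simp add: matrix_vector_mult_diff_rdistrib hD)
  have Clb: "(1 - e1) * norm u \<le> norm (C *v u)" for u
  proof -
    have "norm u \<le> norm (C *v u) + norm (C *v u - u)" by (metis norm_triangle_sub norm_minus_commute)
    then show ?thesis using hC[of u] by (simp add: algebra_simps)
  qed
  have e1': "1 - e1 > 0" using e1 by simp
  note Cinv = inv_bound[OF e1' Clb]
  have CCi: "C *v (Ci *v w) = w" for w using Cinv(1) by (simp add: Ci_def matrix_vector_mul_assoc)
  have Cib: "norm (Ci *v w) \<le> norm w / (1 - e1)" for w
    using Cinv(3)[of w] e1' by (simp add: Ci_def pos_le_divide_eq mult.commute)
  have Cid: "norm (Ci *v w - w) \<le> e1 / (1 - e1) * norm w" for w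
  proof -
    have "norm (Ci *v w - w) = norm (C *v (Ci *v w) - Ci *v w)" using CCi[of w] by (metis norm_minus_commute)
    also have "\<dots> \<le> e1 * norm (Ci *v w)" by (rule hC)
    also have "\<dots> \<le> e1 * (norm w / (1 - e1))" using e1 by (intro mult_left_mono Cib) auto
    finally show ?thesis by simp
  qed
  have trD: "transpose D = transpose UX ** S ** UZ"
    unfolding D_def by (simp add: matrix_transpose_mul St matrix_mul_assoc)
  have Atv: "At *v x = transpose D *v (Ci *v (D *v x))" for x
    unfolding At_def trD by (simp add: D_def matrix_mul_assoc matrix_vector_mul_assoc)
  have Ahv: "Ah *v x = transpose B *v (B *v x)" for x
    unfolding Ah_def B_def by (simp add: matrix_transpose_mul matrix_mul_assoc matrix_vector_mul_assoc)
  have pert: "norm (At *v x - Ah *v x) \<le> f * norm x" for x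
  proof -
    have trm: "transpose (D - B) = transpose D - transpose B" by (simp add: transpose_def vec_eq_iff)
    have eq: "At *v x - Ah *v x = transpose D *v (Ci *v (D *v x) - D *v x)
        + transpose D *v (D *v x - B *v x) + transpose (D - B) *v (B *v x)"
      unfolding trm Atv Ahv by (simp add: matrix_vector_mult_diff_distrib matrix_vector_mult_diff_rdistrib del: transpose_matrix_vector)
    have n1: "norm (transpose D *v (Ci *v (D *v x) - D *v x)) \<le> (1 + e2) * (e1 / (1 - e1) * ((1 + e2) * norm x))"
    proof -
      have "norm (transpose D *v (Ci *v (D *v x) - D *v x)) \<le> (1 + e2) * norm (Ci *v (D *v x) - D *v x)" by (rule DTb)
      also have "\<dots> \<le> (1 + e2) * (e1 / (1 - e1) * norm (D *v x))" using e2 by (intro mult_left_mono Cid) auto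
      also have "\<dots> \<le> (1 + e2) * (e1 / (1 - e1) * ((1 + e2) * norm x))"
        using e2 e1 by (intro mult_left_mono Db) auto
      finally show ?thesis .
    qed
    have n2: "norm (transpose D *v (D *v x - B *v x)) \<le> (1 + e2) * (e2 * norm x)"
      using DTb[of "D *v x - B *v x"] hD[of x] e2 by (meson order_trans mult_left_mono add_nonneg_nonneg zero_le_one less_imp_le)
    have n3: "norm (transpose (D - B) *v (B *v x)) \<le> e2 * (1 * norm x)"
      using DBTb[of "B *v x"] Bb[of x] e2 by (meson order_trans mult_left_mono less_imp_le)
    have "norm (At *v x - Ah *v x) \<le> (1 + e2) * (e1 / (1 - e1) * ((1 + e2) * norm x)) + (1 + e2) * (e2 * norm x) + e2 * (1 * norm x)"
      unfolding eq using n1 n2 n3 by (meson add_mono norm_triangle_le)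
    also have "\<dots> = f * norm x"
      unfolding f_def f1_def using e1' by (simp add: field_simps)
    finally show ?thesis .
  qed
  have Ahq: "x \<bullet> (Ah *v x) = (norm (B *v x))^2" for x
    unfolding Ahv by (simp add: tr_dot[symmetric] inner_commute power2_norm_eq_inner)
  have Ahlb: "s^2 * norm x \<le> norm (Ah *v x)" for x
  proof (cases "x = 0")
    case False
    have "s^2 * (norm x * norm x) \<le> x \<bullet> (Ah *v x)" using sB[of x] Ahq[of x] by (simp add: power2_eq_square)
    also have "\<dots> \<le> norm x * norm (Ah *v x)" by (rule norm_cauchy_schwarz)
    finally show ?thesis using False by (simp add: mult.commute mult.left_commute)
  qed simp
  have Atlb: "(s^2/2) * norm x \<le> norm (At *v x)" for x
  proof (cases "x = 0")
    case False
    have "x \<bullet> (At *v x) = x \<bullet> (Ah *v x) + x \<bullet> (At *v x - Ah *v x)" by (simp add: inner_diff_right)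
    moreover have "- (norm x * (f * norm x)) \<le> x \<bullet> (At *v x - Ah *v x)"
    proof -
      have "\<bar>x \<bullet> (At *v x - Ah *v x)\<bar> \<le> norm x * norm (At *v x - Ah *v x)" by (rule Cauchy_Schwarz_ineq2)
      also have "\<dots> \<le> norm x * (f * norm x)" by (intro mult_left_mono pert) simp
      finally show ?thesis by linarith
    qed
    moreover have "s^2 * (norm x * norm x) \<le> x \<bullet> (Ah *v x)" using sB[of x] Ahq[of x] by (simp add: power2_eq_square)
    moreover have "x \<bullet> (At *v x) \<le> norm x * norm (At *v x)" by (rule norm_cauchy_schwarz)
    ultimately have "(s^2 - f) * (norm x * norm x) \<le> norm x * norm (At *v x)" by (simp add: algebra_simps)
    moreover have "(s^2/2) * (norm x * norm x) \<le> (s^2 - f) * (norm x * norm x)"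
      using s2 by (intro mult_right_mono) auto
    ultimately have "(s^2/2) * norm x * norm x \<le> norm (At *v x) * norm x" by (simp add: algebra_simps)
    then show ?thesis using False by simp
  qed simp
  have s22: "s^2/2 > 0" using s2pos by simp
  note Atinv = inv_bound[OF s22 Atlb]
  note Ahinv = inv_bound[OF s2pos Ahlb]
  have Ati: "matrix_inv At *v (At *v x) = x" for x using Atinv(2) by (simp add: matrix_vector_mul_assoc)
  have Ahi: "Ah *v (matrix_inv Ah *v x) = x" for x using Ahinv(1) by (simp add: matrix_vector_mul_assoc)
  have final: "norm ((matrix_inv At - matrix_inv Ah) *v w) \<le> 2 * f / s^4 * norm w" for w
  proof -
    define u where "u = matrix_inv Ah *v w"
    have ub: "norm u \<le> norm w / s^2" using Ahinv(3)[of w] s2pos by (simp add: u_def pos_le_divide_eq mult.commute)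
    have "(matrix_inv At - matrix_inv Ah) *v w = matrix_inv At *v (Ah *v u - At *v u)"
      using Ati[of u] Ahi[of w] by (simp add: u_def matrix_vector_mult_diff_rdistrib matrix_vector_mult_diff_distrib)
    then have "norm ((matrix_inv At - matrix_inv Ah) *v w) = norm (matrix_inv At *v (Ah *v u - At *v u))" by simp
    also have "\<dots> \<le> norm (Ah *v u - At *v u) / (s^2/2)"
      using Atinv(3)[of "Ah *v u - At *v u"] s22 by (simp add: pos_le_divide_eq mult.commute)
    also have "\<dots> \<le> (f * norm u) / (s^2/2)"
      using pert[of u] s22 by (intro divide_right_mono) (auto simp: norm_minus_commute)
    also have "\<dots> \<le> (f * (norm w / s^2)) / (s^2/2)"
      using ub fpos s22 by (intro divide_right_mono mult_left_mono) auto
    also have "\<dots> = 2 * f / s^4 * norm w" using s2pos by (simp add: field_simps power2_eq_square power4_eq_xxxx)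
    finally show ?thesis .
  qed
  have "spec_norm (matrix_inv At - matrix_inv Ah) \<le> 2 * f / s^4" by (rule spec_ge[OF final])
  then show ?thesis unfolding At_def Ah_def Ci_def C_def f_def s_def B_def .
qed


theorem lemmaB6:
  fixes M :: "'w measure"
    and y :: "real^'n" and X :: "real^'p^'n" and Z :: "real^'q^'n"
    and UX :: "real^'p^'n" and SX VX :: "real^'p^'p"
    and UZ :: "real^'q^'n" and SZ VZ :: "real^'q^'q"
    and Pi :: "'w \<Rightarrow> real^'n^'m"
    and e1 e2 e3 \<delta> :: real
  assumes "prob_space M"
    and "invertible (transpose Z ** Z)"
    and "invertible (transpose X ** projZ Z ** X)"
    and "thin_svd X UX SX VX" and "thin_svd Z UZ SZ VZ"
    and "0 < e1" "e1 < 1/2" "0 < e2" "e2 < 1/2" "0 < e3" "e3 < 1/2" "0 < \<delta>" "\<delta> < 1/2"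
    and "\<exists>E \<in> sets M. measure M E \<ge> 1 - \<delta> \<and> (\<forall>\<omega>\<in>E.
           (let S = transpose (Pi \<omega>) ** Pi \<omega>;
                b = matrix_inv (transpose X ** projZ Z ** X) *v (transpose X ** projZ Z *v y);
                eh = y - X *v b
            in spec_norm (transpose UZ ** S ** UZ - mat 1) \<le> e1
             \<and> spec_norm (transpose UZ ** S ** UX - transpose UZ ** UX) \<le> e2
             \<and> norm (transpose UZ *v (S *v eh) - transpose UZ *v eh) \<le> e3 * norm eh))"
    and "(sigma_min (transpose UZ ** UX))\<^sup>2 \<ge> 2 * f1 e1 e2"
  shows "\<exists>E \<in> sets M. measure M E \<ge> 1 - \<delta> \<and> (\<forall>\<omega>\<in>E.
           (let S = transpose (Pi \<omega>) ** Pi \<omega>;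
                At = transpose UX ** S ** UZ ** matrix_inv (transpose UZ ** S ** UZ)
                       ** transpose UZ ** S ** UX;
                Ah = transpose UX ** UZ ** transpose UZ ** UX
            in spec_norm (matrix_inv At - matrix_inv Ah)
                 \<le> 2 * f1 e1 e2 / (sigma_min (transpose UZ ** UX)) ^ 4))"
  proof -
  obtain E where E: "E \<in> sets M" "measure M E \<ge> 1 - \<delta>" and P: "\<forall>\<omega>\<in>E.
           (let S = transpose (Pi \<omega>) ** Pi \<omega>;
                b = matrix_inv (transpose X ** projZ Z ** X) *v (transpose X ** projZ Z *v y);
                eh = y - X *v b
            in spec_norm (transpose UZ ** S ** UZ - mat 1) \<le> e1
             \<and> spec_norm (transpose UZ ** S ** UX - transpose UZ ** UX) \<le> e2
             \<and> norm (transpose UZ *v (S *v eh) - transpose UZ *v eh) \<le> e3 * norm eh)"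
    using assms(14) by blast
  have UX: "transpose UX ** UX = mat 1" using assms(4) unfolding thin_svd_def by blast
  have UZ: "transpose UZ ** UZ = mat 1" using assms(5) unfolding thin_svd_def by blast
  show ?thesis
  proof (intro bexI[OF _ E(1)] conjI ballI)
    show "measure M E \<ge> 1 - \<delta>" by (rule E(2))
    fix \<omega> assume w: "\<omega> \<in> E"
    define S where "S = transpose (Pi \<omega>) ** Pi \<omega>"
    have St: "transpose S = S" unfolding S_def by (simp add: matrix_transpose_mul)
    have h: "spec_norm (transpose UZ ** S ** UZ - mat 1) \<le> e1"
      "spec_norm (transpose UZ ** S ** UX - transpose UZ ** UX) \<le> e2"
      using P w unfolding S_def Let_def by auto
    have "spec_norm (matrix_inv (transpose UX ** S ** UZ ** matrix_inv (transpose UZ ** S ** UZ)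
                       ** transpose UZ ** S ** UX) - matrix_inv (transpose UX ** UZ ** transpose UZ ** UX))
                 \<le> 2 * f1 e1 e2 / (sigma_min (transpose UZ ** UX)) ^ 4"
      by (rule core[OF UX UZ St assms(6,7,8) h assms(15)])
    then show "let S = transpose (Pi \<omega>) ** Pi \<omega>;
                At = transpose UX ** S ** UZ ** matrix_inv (transpose UZ ** S ** UZ)
                       ** transpose UZ ** S ** UX;
                Ah = transpose UX ** UZ ** transpose UZ ** UX
            in spec_norm (matrix_inv At - matrix_inv Ah)
                 \<le> 2 * f1 e1 e2 / (sigma_min (transpose UZ ** UX)) ^ 4"
      unfolding S_def Let_def .
  qed
qed

end
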